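(* For all $C,\delta>0$ there are $\varepsilon>0$ and $n_0\in\mathbb N$ such that every $C$-bipartite-Ramsey graph $G=(V_1,V_2,E)$ with $|V_1|,|V_2|\ge n_0$ is $(\delta,\varepsilon)$-bipartite-rich.
   Context: A bipartite graph $G=(V_1,V_2,E)$ has vertex set $V_1\sqcup V_2$ and edge set $E\subset V_1\times V_2$; $N(v)$ is the neighbourhood of $v$ and $\overline{N}(v)$ its complement in the opposite class. Given $C>0$, $G$ is called $C$-bipartite-Ramsey if for all integers $t_1\ge C\log_2|V_1|$ and $t_2\ge C\log_2|V_2|$ there are no $T_1\subset V_1$, $T_2\subset V_2$ with $|T_1|=t_1$, $|T_2|=t_2$ such that all pairs in $T_1\times T_2$ are edges, or all are non-edges. Given $\delta,\varepsilon>0$, $G$ is $(\delta,\varepsilon)$-bipartite-rich if for each $i\in\{1,2\}$: for every $W\subset V_i$ with $|W|\ge\delta|V_i|$, there are at most $|V_{3-i}|^{1/5}$ vertices $v\in V_{3-i}$ such that $|N(v)\cap W|\le\varepsilon|W|$ or $|\overline{N}(v)\cap W|<\varepsilon|W|$. *)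

theory Defs
  imports Complex_Main
begin

text \<open>Bipartite graph: classes V1, V2 (finite) and edge set E with E a subset of V1 x V2.
  Vertices are natural numbers (every finite bipartite graph is isomorphic to such a one).\<close>

definition bip_graph :: "nat set \<Rightarrow> nat set \<Rightarrow> (nat \<times> nat) set \<Rightarrow> bool" where
  "bip_graph V1 V2 E \<longleftrightarrow> finite V1 \<and> finite V2 \<and> E \<subseteq> V1 \<times> V2"

definition bip_ramsey :: "real \<Rightarrow> nat set \<Rightarrow> nat set \<Rightarrow> (nat \<times> nat) set \<Rightarrow> bool" where
  "bip_ramsey C V1 V2 E \<longleftrightarrow>
     (\<forall>t1 t2 :: nat. real t1 \<ge> C * log 2 (card V1) \<and> real t2 \<ge> C * log 2 (card V2) \<longrightarrow>
        \<not> (\<exists>T1 T2. T1 \<subseteq> V1 \<and> T2 \<subseteq> V2 \<and> card T1 = t1 \<and> card T2 = t2 \<and>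
              ((T1 \<times> T2 \<subseteq> E) \<or> (T1 \<times> T2) \<inter> E = {})))"

definition rich_side :: "real \<Rightarrow> real \<Rightarrow> nat set \<Rightarrow> nat set \<Rightarrow> (nat \<times> nat) set \<Rightarrow> bool" where
  "rich_side \<delta> \<epsilon> X Y R \<longleftrightarrow>
     (\<forall>W. W \<subseteq> X \<and> real (card W) \<ge> \<delta> * real (card X) \<longrightarrow>
        real (card {y \<in> Y. real (card {x \<in> W. (x, y) \<in> R}) \<le> \<epsilon> * real (card W)
                        \<or> real (card {x \<in> W. (x, y) \<notin> R}) < \<epsilon> * real (card W)})
          \<le> real (card Y) powr (1/5))"

definition bip_rich :: "real \<Rightarrow> real \<Rightarrow> nat set \<Rightarrow> nat set \<Rightarrow> (nat \<times> nat) set \<Rightarrow> bool" where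
  "bip_rich \<delta> \<epsilon> V1 V2 E \<longleftrightarrow>
     rich_side \<delta> \<epsilon> V1 V2 E \<and> rich_side \<delta> \<epsilon> V2 V1 ((\<lambda>(a, b). (b, a)) ` E)"

end

theory Submission imports Defs "HOL-Real_Asymp.Real_Asymp" begin

lemma dcount:
  assumes "finite A" "finite T"
  shows "(\<Sum>x\<in>A. card {y\<in>T. P x y}) = (\<Sum>y\<in>T. card {x\<in>A. P x y})"
proof -
  have "(\<Sum>x\<in>A. card {y\<in>T. P x y}) = (\<Sum>x\<in>A. \<Sum>y\<in>T. if P x y then 1 else 0)"
    using assms by (auto simp: sum.If_cases intro!: sum.cong arg_cong[where f=card])
  also have "\<dots> = (\<Sum>y\<in>T. \<Sum>x\<in>A. if P x y then 1 else 0)" by (rule sum.swap)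
  also have "\<dots> = (\<Sum>y\<in>T. card {x\<in>A. P x y})"
    using assms by (auto simp: sum.If_cases intro!: sum.cong arg_cong[where f=card])
  finally show ?thesis .
qed

lemma greedy:
  fixes W :: "'a set" and B :: "'b set" and e :: real
  assumes fW: "finite W" and fB: "finite B" and e0: "0 \<le> e" and e1: "e \<le> 1/2"
    and low: "\<forall>y\<in>B. real (card {x\<in>W. P x y}) \<le> e * real (card W)"
  shows "2 * k \<le> card W \<Longrightarrow> \<exists>S T. S \<subseteq> W \<and> card S = k \<and> T \<subseteq> B \<and>
           real (card T) \<ge> (1 - 2*e)^k * real (card B) \<and> (\<forall>x\<in>S. \<forall>y\<in>T. \<not> P x y)"
proof (induction k)
  case 0
  show ?case by (rule exI[of _ "{}"], rule exI[of _ B]) auto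
next
  case (Suc k)
  then obtain S T where S: "S \<subseteq> W" "card S = k" and T: "T \<subseteq> B"
    and Tc: "real (card T) \<ge> (1 - 2*e)^k * real (card B)" and ST: "\<forall>x\<in>S. \<forall>y\<in>T. \<not> P x y"
    by auto
  define A where "A = W - S"
  have fA: "finite A" using fW A_def by auto
  have fT: "finite T" using fB T finite_subset by auto
  have cA: "card A = card W - k" using S fW A_def by (simp add: card_Diff_subset finite_subset)
  have "2 * card A \<ge> card W" using cA Suc.prems by simp
  then have cA2: "2 * real (card A) \<ge> real (card W)"
    by (metis of_nat_le_iff of_nat_mult of_nat_numeral)
  have Ane: "A \<noteq> {}" using cA Suc.prems by auto
  have "\<exists>x\<in>A. real (card {y\<in>T. P x y}) \<le> 2 * e * real (card T)"
  proof (rule ccontr)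
    assume "\<not> ?thesis"
    then have gt: "\<forall>x\<in>A. real (card {y\<in>T. P x y}) > 2 * e * real (card T)" by auto
    have "(\<Sum>x\<in>A. 2 * e * real (card T)) < (\<Sum>x\<in>A. real (card {y\<in>T. P x y}))"
      by (rule sum_strict_mono[OF fA Ane]) (use gt in auto)
    also have "\<dots> = real (\<Sum>x\<in>A. card {y\<in>T. P x y})" by simp
    also have "\<dots> = real (\<Sum>y\<in>T. card {x\<in>A. P x y})" using dcount[OF fA fT] by simp
    also have "\<dots> = (\<Sum>y\<in>T. real (card {x\<in>A. P x y}))" by simp
    also have "\<dots> \<le> (\<Sum>y\<in>T. e * real (card W))"
    proof (rule sum_mono)
      fix y assume "y \<in> T"
      then have "real (card {x\<in>W. P x y}) \<le> e * real (card W)" using low T by auto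
      moreover have "card {x\<in>A. P x y} \<le> card {x\<in>W. P x y}"
        using fW A_def by (intro card_mono) auto
      ultimately show "real (card {x\<in>A. P x y}) \<le> e * real (card W)" by linarith
    qed
    finally have "real (card A) * (2 * e * real (card T)) < real (card T) * (e * real (card W))"
      by simp
    moreover have "real (card T) * (e * real (card W)) \<le> real (card A) * (2 * e * real (card T))"
    proof -
      have "e * real (card T) \<ge> 0" using e0 by simp
      then have "(e * real (card T)) * real (card W) \<le> (e * real (card T)) * (2 * real (card A))"
        using cA2 by (intro mult_left_mono) auto
      then show ?thesis by (simp add: algebra_simps)
    qed
    ultimately show False by linarith
  qed
  then obtain x where xA: "x \<in> A" and xs: "real (card {y\<in>T. P x y}) \<le> 2 * e * real (card T)" by blast
  define T' where "T' = {y\<in>T. \<not> P x y}"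
  have "card T = card {y\<in>T. P x y} + card T'"
  proof -
    have "T = {y\<in>T. P x y} \<union> T'" unfolding T'_def by auto
    moreover have "{y\<in>T. P x y} \<inter> T' = {}" unfolding T'_def by auto
    ultimately show ?thesis using fT T'_def by (metis card_Un_disjoint finite_Un)
  qed
  then have "real (card T') \<ge> (1 - 2*e) * real (card T)" using xs by (simp add: algebra_simps)
  moreover have "(1 - 2*e) * real (card T) \<ge> (1 - 2*e) * ((1 - 2*e)^k * real (card B))"
    using Tc e1 by (intro mult_left_mono) auto
  ultimately have c': "real (card T') \<ge> (1 - 2*e)^Suc k * real (card B)" by simp
  have "x \<notin> S" using xA A_def by auto
  then have "card (insert x S) = Suc k" using S fW finite_subset by fastforce
  moreover have "insert x S \<subseteq> W" using xA A_def S by auto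
  moreover have "T' \<subseteq> B" using T T'_def by auto
  moreover have "\<forall>x'\<in>insert x S. \<forall>y\<in>T'. \<not> P x' y" using ST T'_def by auto
  ultimately show ?case using c' by blast
qed
lemma halving:
  fixes X :: "'a set" and Y :: "'b set"
  assumes fX: "finite X" and fY: "finite Y"
  shows "k \<le> card Y \<Longrightarrow> \<exists>S X'. S \<subseteq> Y \<and> card S = k \<and> X' \<subseteq> X \<and>
          real (card X') * 2^k \<ge> real (card X) \<and>
          (\<forall>y\<in>S. (\<forall>x\<in>X'. P x y) \<or> (\<forall>x\<in>X'. \<not> P x y))"
proof (induction k)
  case 0
  show ?case by (rule exI[of _ "{}"], rule exI[of _ X]) auto
next
  case (Suc k)
  then obtain S X' where S: "S \<subseteq> Y" "card S = k" and X': "X' \<subseteq> X"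
    and c: "real (card X') * 2^k \<ge> real (card X)"
    and h: "\<forall>y\<in>S. (\<forall>x\<in>X'. P x y) \<or> (\<forall>x\<in>X'. \<not> P x y)" by auto
  have "card S < card Y" using S Suc.prems by simp
  moreover have "finite S" using S fY finite_subset by auto
  ultimately have "\<not> Y \<subseteq> S" using card_mono leD by metis
  then obtain y where yY: "y \<in> Y" and yS: "y \<notin> S" by blast
  define Xa where "Xa = {x\<in>X'. P x y}"
  define Xb where "Xb = {x\<in>X'. \<not> P x y}"
  have fX': "finite X'" using X' fX finite_subset by auto
  have "card X' = card Xa + card Xb"
  proof -
    have "X' = Xa \<union> Xb" "Xa \<inter> Xb = {}" unfolding Xa_def Xb_def by auto
    then show ?thesis using fX' by (metis card_Un_disjoint finite_Un)
  qed
  then have "2 * card Xa \<ge> card X' \<or> 2 * card Xb \<ge> card X'" by linarith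
  then obtain Z where Z: "Z = Xa \<or> Z = Xb" and cZ: "2 * card Z \<ge> card X'" by blast
  have cZr: "2 * real (card Z) \<ge> real (card X')"
    using cZ by (metis of_nat_le_iff of_nat_mult of_nat_numeral)
  have ZX: "Z \<subseteq> X'" using Z Xa_def Xb_def by auto
  have "real (card X) \<le> real (card X') * 2^k" by (rule c)
  also have "\<dots> \<le> (2 * real (card Z)) * 2^k" using cZr by (intro mult_right_mono) auto
  finally have c': "real (card X) \<le> real (card Z) * 2^Suc k" by simp
  have "card (insert y S) = Suc k" using S yS fY finite_subset by fastforce
  moreover have "insert y S \<subseteq> Y" using S yY by auto
  moreover have "Z \<subseteq> X" using ZX X' by auto
  moreover have "\<forall>y'\<in>insert y S. (\<forall>x\<in>Z. P x y') \<or> (\<forall>x\<in>Z. \<not> P x y')"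
    using h ZX Z Xa_def Xb_def by blast
  ultimately show ?case using c' by blast
qed


lemma hom_extract:
  assumes "T1 \<subseteq> X" "T2 \<subseteq> Y" "finite T1" "finite T2" "card T1 \<ge> a" "card T2 \<ge> b"
    and hom: "(\<forall>x\<in>T1. \<forall>y\<in>T2. (x,y) \<in> R) \<or> (\<forall>x\<in>T1. \<forall>y\<in>T2. (x,y) \<notin> R)"
  shows "\<exists>U1 U2. U1 \<subseteq> X \<and> U2 \<subseteq> Y \<and> card U1 = a \<and> card U2 = b \<and> (U1 \<times> U2 \<subseteq> R \<or> U1 \<times> U2 \<inter> R = {})"
proof -
  obtain U1 where U1: "U1 \<subseteq> T1" "card U1 = a" using obtain_subset_with_card_n[OF assms(5)] by metis
  obtain U2 where U2: "U2 \<subseteq> T2" "card U2 = b" using obtain_subset_with_card_n[OF assms(6)] by metis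
  have "U1 \<times> U2 \<subseteq> R \<or> U1 \<times> U2 \<inter> R = {}"
  proof (cases "\<forall>x\<in>T1. \<forall>y\<in>T2. (x,y) \<in> R")
    case True then show ?thesis using U1 U2 by blast
  next
    case False then have "\<forall>x\<in>T1. \<forall>y\<in>T2. (x,y) \<notin> R" using hom by blast
    then show ?thesis using U1 U2 by blast
  qed
  moreover have "U1 \<subseteq> X" "U2 \<subseteq> Y" using U1 U2 assms(1,2) by auto
  ultimately show ?thesis using U1(2) U2(2) by blast
qed

lemma ceil_bound:
  assumes "x \<ge> 0" shows "real (nat \<lceil>x\<rceil>) \<le> x + 1" "real (nat \<lceil>x\<rceil>) \<ge> x"
  using assms of_int_ceiling_le_add_one[of x] by auto

lemma side:
  fixes X Y :: "nat set" and R :: "(nat \<times> nat) set" and C \<delta> \<theta> q \<epsilon> :: real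
  assumes C0: "C > 0" and d0: "\<delta> > 0" and fX: "finite X" and fY: "finite Y"
    and th: "\<theta> = 1 / (40 * C + 4)" and qd: "q = 2 powr (- \<theta> / C)" and ed: "\<epsilon> = (1 - q) / 2"
    and NR: "\<And>T1 T2. T1 \<subseteq> X \<Longrightarrow> T2 \<subseteq> Y \<Longrightarrow> card T1 = nat \<lceil>C * log 2 (card X)\<rceil>
               \<Longrightarrow> card T2 = nat \<lceil>C * log 2 (card Y)\<rceil> \<Longrightarrow> \<not> (T1 \<times> T2 \<subseteq> R \<or> T1 \<times> T2 \<inter> R = {})"
    and n1: "1 \<le> card X" and n2: "1 \<le> card Y"
    and sX: "C * log 2 (card X) + 1 \<le> sqrt (card X)"
    and dX: "2 * (C * log 2 (card X) + 1) \<le> \<delta> * card X"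
    and tY: "2 * (C * log 2 (card Y) + 1) \<le> card Y"
    and qY: "C * log 2 (card Y) + 1 \<le> q / 4 * real (card Y) powr (1/10)"
  shows "rich_side \<delta> \<epsilon> X Y R"
proof -
  define n1 where "n1 = real (card X)"
  define n2 where "n2 = real (card Y)"
  define a where "a = nat \<lceil>C * log 2 (card X)\<rceil>"
  define b where "b = nat \<lceil>C * log 2 (card Y)\<rceil>"
  have n1p: "n1 \<ge> 1" and n2p: "n2 \<ge> 1" using n1 n2 n1_def n2_def by auto
  have L1: "log 2 n1 \<ge> 0" "log 2 n2 \<ge> 0" using n1p n2p by auto
  have ha: "real a \<le> C * log 2 n1 + 1" "real a \<ge> C * log 2 n1"
    using ceil_bound[of "C * log 2 n1"] L1 C0 a_def n1_def by auto
  have hb: "real b \<le> C * log 2 n2 + 1" "real b \<ge> C * log 2 n2"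
    using ceil_bound[of "C * log 2 n2"] L1 C0 b_def n2_def by auto
  have NR': "False" if prem: "T1 \<subseteq> X" "T2 \<subseteq> Y" "finite T1" "finite T2" "card T1 \<ge> a" "card T2 \<ge> b"
    "(\<forall>x\<in>T1. \<forall>y\<in>T2. (x,y) \<in> R) \<or> (\<forall>x\<in>T1. \<forall>y\<in>T2. (x,y) \<notin> R)" for T1 T2
  proof -
    obtain U1 U2 where "U1 \<subseteq> X" "U2 \<subseteq> Y" "card U1 = a" "card U2 = b"
      "U1 \<times> U2 \<subseteq> R \<or> U1 \<times> U2 \<inter> R = {}"
      using hom_extract[OF prem] by blast
    then show False using NR a_def b_def by blast
  qed
  have th0: "\<theta> > 0" "\<theta> \<le> 1/4" "4 * C * \<theta> \<le> 1/10"
    unfolding th using C0 by (auto simp: field_simps)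
  have "\<theta>/C > 0" using th0 C0 by simp
  then have "2 powr (-\<theta>/C) < 2 powr 0" by (intro powr_less_mono) auto
  then have q0: "q > 0" "q < 1" using qd by auto
  have e0: "\<epsilon> \<ge> 0" "\<epsilon> \<le> 1/2" "1 - 2 * \<epsilon> = q" using ed q0 by auto
  have stepA: "n1 < 16 * n2 powr (4 * C)"
  proof -
    have "real (2 * b) \<le> real (card Y)" using hb tY n2_def by simp
    then have k2: "2 * b \<le> card Y" by linarith
    obtain S X' where S: "S \<subseteq> Y" "card S = 2 * b" and X': "X' \<subseteq> X"
      and cX: "real (card X') * 2^(2*b) \<ge> real (card X)"
      and h: "\<forall>y\<in>S. (\<forall>x\<in>X'. (x,y) \<in> R) \<or> (\<forall>x\<in>X'. (x,y) \<notin> R)"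
      using halving[OF fX fY k2, of "\<lambda>x y. (x,y) \<in> R"] by blast
    define Sp where "Sp = {y\<in>S. \<forall>x\<in>X'. (x,y) \<in> R}"
    define Sm where "Sm = S - Sp"
    have fS: "finite S" using S fY finite_subset by auto
    have fX': "finite X'" using X' fX finite_subset by auto
    have "card Sp + card Sm = 2 * b"
      using fS S(2) unfolding Sm_def Sp_def
      by (metis (no_types, lifting) card_Diff_subset card_mono finite_subset le_add_diff_inverse mem_Collect_eq subsetI)
    then have bb: "card Sp \<ge> b \<or> card Sm \<ge> b" by linarith
    have Smh: "\<forall>x\<in>X'. \<forall>y\<in>Sm. (x,y) \<notin> R" using h unfolding Sm_def Sp_def by blast
    have Sph: "\<forall>x\<in>X'. \<forall>y\<in>Sp. (x,y) \<in> R" unfolding Sp_def by blast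
    have "card X' < a"
    proof (rule ccontr)
      assume "\<not> card X' < a"
      then have aX: "a \<le> card X'" by simp
      show False
      proof (cases "card Sp \<ge> b")
        case True
        have "Sp \<subseteq> Y" "finite Sp" using S fS Sp_def by auto
        then show False using NR'[OF X' _ fX' _ aX True disjI1[OF Sph]] by blast
      next
        case False
        then have "card Sm \<ge> b" using bb by simp
        moreover have "Sm \<subseteq> Y" "finite Sm" using S fS Sm_def by auto
        ultimately show False using NR'[OF X' _ fX' _ aX _ disjI2[OF Smh]] by blast
      qed
    qed
    then have ra: "real (card X') < real a" by simp
    have "n1 \<le> real (card X') * 2^(2*b)" using cX n1_def by simp
    also have "\<dots> < real a * 2^(2*b)" using ra by simp
    finally have A1: "n1 < real a * 2^(2*b)" .
    have "(2::real)^(2*b) = 2 powr (real (2*b))" by (rule powr_realpow[symmetric]) simp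
    also have "\<dots> \<le> 2 powr (2 * (C * log 2 n2 + 1))" using hb by (intro powr_mono) auto
    also have "\<dots> = 2 powr (log 2 n2 * (2*C)) * 2 powr 2"
      unfolding powr_add[symmetric] by (simp add: algebra_simps)
    also have "\<dots> = (2 powr (log 2 n2)) powr (2 * C) * 4" by (simp add: powr_powr)
    also have "\<dots> = 4 * n2 powr (2 * C)" using n2p by simp
    finally have A2: "(2::real)^(2*b) \<le> 4 * n2 powr (2 * C)" .
    have A3: "real a \<le> sqrt n1" using ha sX n1_def by simp
    have "n1 < sqrt n1 * (4 * n2 powr (2 * C))"
    proof -
      have "real a * 2^(2*b) \<le> sqrt n1 * (4 * n2 powr (2 * C))"
        using A2 A3 n1p by (intro mult_mono) auto
      then show ?thesis using A1 by simp
    qed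
    moreover have "n1 = sqrt n1 * sqrt n1" using n1p by simp
    moreover have "sqrt n1 > 0" using n1p by simp
    ultimately have "sqrt n1 < 4 * n2 powr (2 * C)" by (metis mult_less_cancel_left_pos)
    then have "sqrt n1 * sqrt n1 < (4 * n2 powr (2 * C)) * (4 * n2 powr (2 * C))"
      using \<open>sqrt n1 > 0\<close> by (intro mult_strict_mono) auto
    also have "\<dots> = 16 * (n2 powr (2 * C) * n2 powr (2 * C))" by simp
    also have "\<dots> = 16 * n2 powr (4 * C)" by (simp add: powr_add [symmetric])
    finally show ?thesis using n1p by simp
  qed
  have qa: "q ^ a \<ge> q * (1/2 * n2 powr (-1/10))"
  proof -
    have "q ^ a = q powr (real a)" by (rule powr_realpow[symmetric]) (use q0 in simp)
    also have "\<dots> \<ge> q powr (C * log 2 n1 + 1)" using ha q0 by (intro powr_mono') auto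
    finally have i1: "q ^ a \<ge> q powr (C * log 2 n1 + 1)" .
    have "q powr (C * log 2 n1 + 1) = q powr (C * log 2 n1) * q" using q0 by (simp add: powr_add)
    also have "q powr (C * log 2 n1) = 2 powr (-\<theta> / C * (C * log 2 n1))" using qd by (simp add: powr_powr)
    also have "\<dots> = 2 powr (log 2 n1 * (-\<theta>))" using C0 by (simp add: algebra_simps)
    also have "\<dots> = (2 powr (log 2 n1)) powr (-\<theta>)" by (simp add: powr_powr)
    also have "\<dots> = n1 powr (-\<theta>)" using n1p by simp
    finally have i2: "q powr (C * log 2 n1 + 1) = n1 powr (-\<theta>) * q" .
    have "n1 powr (-\<theta>) \<ge> (16 * n2 powr (4 * C)) powr (-\<theta>)"
      using stepA th0 n1p by (intro powr_mono2') auto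
    also have "(16 * n2 powr (4 * C)) powr (-\<theta>) = 16 powr (-\<theta>) * n2 powr (4 * C * (-\<theta>))"
      using n2p by (simp add: powr_mult powr_powr)
    finally have i3: "n1 powr (-\<theta>) \<ge> 16 powr (-\<theta>) * n2 powr (4 * C * (-\<theta>))" .
    have "(16::real) powr (-\<theta>) \<ge> 16 powr (-1/4)" using th0 by (intro powr_mono) auto
    moreover have "(16::real) powr (-1/4) = 1/2"
    proof -
      have h16: "(16::real) = 2 powr 4" by simp
      have "(16::real) powr (-1/4) = (2 powr 4) powr (-1/4)" by (simp only: h16[symmetric])
      also have "\<dots> = 2 powr (4 * (-1/4))" by (simp only: powr_powr)
      also have "\<dots> = 1/2" by (simp add: powr_minus_divide)
      finally show ?thesis .
    qed
    ultimately have i4: "(16::real) powr (-\<theta>) \<ge> 1/2" by linarith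
    have i5: "n2 powr (4 * C * (-\<theta>)) \<ge> n2 powr (-1/10)" using th0 n2p by (intro powr_mono) auto
    have "16 powr (-\<theta>) * n2 powr (4 * C * (-\<theta>)) \<ge> 1/2 * n2 powr (-1/10)"
      using i4 i5 by (intro mult_mono) auto
    then have "n1 powr (-\<theta>) \<ge> 1/2 * n2 powr (-1/10)" using i3 by linarith
    then have "n1 powr (-\<theta>) * q \<ge> q * (1/2 * n2 powr (-1/10))"
      using q0 by (simp add: mult.commute mult_left_mono)
    then show ?thesis using i1 i2 by linarith
  qed
  have big: "False" if B: "B \<subseteq> Y" and low: "\<forall>y\<in>B. real (card {x\<in>W. P x y}) \<le> \<epsilon> * real (card W)"
     and cB: "2 * real (card B) \<ge> n2 powr (1/5)" and W: "W \<subseteq> X" "\<delta> * n1 \<le> real (card W)"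
     and noP: "\<And>S T. S \<subseteq> X \<Longrightarrow> T \<subseteq> Y \<Longrightarrow> finite S \<Longrightarrow> finite T \<Longrightarrow> card S \<ge> a \<Longrightarrow> card T \<ge> b
        \<Longrightarrow> (\<forall>x\<in>S. \<forall>y\<in>T. \<not> P x y) \<Longrightarrow> False"
     for B W P
  proof -
    have fW: "finite W" using W fX finite_subset by auto
    have fB: "finite B" using B fY finite_subset by auto
    have "real (2 * a) \<le> real (card W)" using ha dX W n1_def by simp
    then have a2: "2 * a \<le> card W" by linarith
    obtain S T where S: "S \<subseteq> W" "card S = a" and T: "T \<subseteq> B"
      and cT: "real (card T) \<ge> (1 - 2*\<epsilon>)^a * real (card B)" and ST: "\<forall>x\<in>S. \<forall>y\<in>T. \<not> P x y"
      using greedy[OF fW fB e0(1) e0(2) low a2] by blast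
    have "q * (1/2 * n2 powr (-1/10)) * (n2 powr (1/5) / 2) \<le> q ^ a * real (card B)"
      using qa cB q0 by (intro mult_mono) auto
    moreover have "q * (1/2 * n2 powr (-1/10)) * (n2 powr (1/5) / 2) = q / 4 * n2 powr (1/10)"
    proof -
      have "q * (1/2 * n2 powr (-1/10)) * (n2 powr (1/5) / 2) = q / 4 * (n2 powr (-1/10) * n2 powr (1/5))"
        by (simp add: algebra_simps)
      moreover have "n2 powr (-1/10) * n2 powr (1/5) = n2 powr (1/10)"
        using n2p by (simp add: powr_add[symmetric])
      ultimately show ?thesis by simp
    qed
    moreover have "q ^ a * real (card B) \<le> real (card T)" using cT e0(3) by simp
    ultimately have "real (card T) \<ge> q / 4 * n2 powr (1/10)" by linarith
    then have "real (card T) \<ge> real b" using qY hb n2_def by simp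
    then have "card T \<ge> b" by linarith
    moreover have "finite S" "finite T" using S T fW fB finite_subset by auto
    ultimately show False using noP[of S T] S T W B ST by auto
  qed
  show ?thesis unfolding rich_side_def
  proof (intro allI impI)
    fix W assume W: "W \<subseteq> X \<and> \<delta> * real (card X) \<le> real (card W)"
    then have WX: "W \<subseteq> X" and Wc: "\<delta> * n1 \<le> real (card W)" using n1_def by auto
    define Lo where "Lo = {y\<in>Y. real (card {x\<in>W. (x,y)\<in>R}) \<le> \<epsilon> * real (card W)}"
    define Hi where "Hi = {y\<in>Y. real (card {x\<in>W. \<not> (x,y)\<in>R}) \<le> \<epsilon> * real (card W)}"
    let ?Bad = "{y \<in> Y. real (card {x \<in> W. (x, y) \<in> R}) \<le> \<epsilon> * real (card W) \<or>
                     real (card {x \<in> W. (x, y) \<notin> R}) < \<epsilon> * real (card W)}"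
    have sub: "?Bad \<subseteq> Lo \<union> Hi" unfolding Lo_def Hi_def by auto
    have fLo: "finite Lo" and fHi: "finite Hi" using fY unfolding Lo_def Hi_def by auto
    have "card ?Bad \<le> card (Lo \<union> Hi)" using sub fLo fHi by (intro card_mono) auto
    also have "\<dots> \<le> card Lo + card Hi" by (rule card_Un_le)
    finally have cb: "real (card ?Bad) \<le> real (card Lo) + real (card Hi)" by linarith
    have lo: "2 * real (card Lo) < n2 powr (1/5)"
    proof (rule ccontr)
      assume "\<not> ?thesis"
      then have c: "2 * real (card Lo) \<ge> n2 powr (1/5)" by simp
      show False
      proof (rule big[of Lo W "\<lambda>x y. (x,y) \<in> R"])
        show "Lo \<subseteq> Y" unfolding Lo_def by auto
        show "\<forall>y\<in>Lo. real (card {x\<in>W. (x,y) \<in> R}) \<le> \<epsilon> * real (card W)" unfolding Lo_def by auto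
        show "2 * real (card Lo) \<ge> n2 powr (1/5)" by (rule c)
        show "W \<subseteq> X" "\<delta> * n1 \<le> real (card W)" using WX Wc by auto
        fix S T assume "S \<subseteq> X" "T \<subseteq> Y" "finite S" "finite T" "card S \<ge> a" "card T \<ge> b"
          "\<forall>x\<in>S. \<forall>y\<in>T. (x,y) \<notin> R"
        then show False using NR'[of S T] by blast
      qed
    qed
    have hi: "2 * real (card Hi) < n2 powr (1/5)"
    proof (rule ccontr)
      assume "\<not> ?thesis"
      then have c: "2 * real (card Hi) \<ge> n2 powr (1/5)" by simp
      show False
      proof (rule big[of Hi W "\<lambda>x y. \<not> (x,y) \<in> R"])
        show "Hi \<subseteq> Y" unfolding Hi_def by auto
        show "\<forall>y\<in>Hi. real (card {x\<in>W. \<not> (x,y) \<in> R}) \<le> \<epsilon> * real (card W)" unfolding Hi_def by auto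
        show "2 * real (card Hi) \<ge> n2 powr (1/5)" by (rule c)
        show "W \<subseteq> X" "\<delta> * n1 \<le> real (card W)" using WX Wc by auto
        fix S T assume "S \<subseteq> X" "T \<subseteq> Y" "finite S" "finite T" "card S \<ge> a" "card T \<ge> b"
          "\<forall>x\<in>S. \<forall>y\<in>T. \<not> \<not> (x,y) \<in> R"
        then show False using NR'[of S T] by blast
      qed
    qed
    show "real (card ?Bad) \<le> real (card Y) powr (1/5)" using cb lo hi n2_def by simp
  qed
qed

lemma nat_ceil_ge: "x \<le> real (nat \<lceil>x\<rceil>)"
proof -
  have "x \<le> of_int \<lceil>x\<rceil>" by (rule le_of_int_ceiling)
  also have "(of_int \<lceil>x\<rceil> :: real) \<le> real (nat \<lceil>x\<rceil>)" by simp
  finally show ?thesis .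
qed

lemma eventual_conds:
  fixes C \<delta> q :: real
  assumes "C > 0" "\<delta> > 0" "q > 0"
  shows "\<exists>N::nat. \<forall>n\<ge>N. 1 \<le> real n \<and> C * log 2 (real n) + 1 \<le> sqrt (real n)
     \<and> 2 * (C * log 2 (real n) + 1) \<le> \<delta> * real n \<and> 2 * (C * log 2 (real n) + 1) \<le> real n
     \<and> C * log 2 (real n) + 1 \<le> q / 4 * real n powr (1/10)"
proof -
  have e1: "eventually (\<lambda>n::nat. 1 \<le> real n) at_top" by real_asymp
  have e2: "eventually (\<lambda>n::nat. C * log 2 (real n) + 1 \<le> sqrt (real n)) at_top"
    using assms by real_asymp
  have e3: "eventually (\<lambda>n::nat. 2 * (C * log 2 (real n) + 1) \<le> \<delta> * real n) at_top"
    using assms by real_asymp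
  have e4: "eventually (\<lambda>n::nat. 2 * (C * log 2 (real n) + 1) \<le> real n) at_top"
    using assms by real_asymp
  have e5: "eventually (\<lambda>n::nat. C * log 2 (real n) + 1 \<le> q / 4 * real n powr (1/10)) at_top"
    using assms by real_asymp
  have "eventually (\<lambda>n::nat. 1 \<le> real n \<and> C * log 2 (real n) + 1 \<le> sqrt (real n)
     \<and> 2 * (C * log 2 (real n) + 1) \<le> \<delta> * real n \<and> 2 * (C * log 2 (real n) + 1) \<le> real n
     \<and> C * log 2 (real n) + 1 \<le> q / 4 * real n powr (1/10)) at_top"
    using e1 e2 e3 e4 e5 by (intro eventually_conj) auto
  then show ?thesis unfolding eventually_at_top_linorder by blast
qed

theorem lemma2p5:
  fixes C \<delta> :: real
  assumes "C > 0" and "\<delta> > 0"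
  shows "\<exists>\<epsilon> > 0. \<exists>n0 :: nat. \<forall>V1 V2 E.
           bip_graph V1 V2 E \<and> bip_ramsey C V1 V2 E \<and> card V1 \<ge> n0 \<and> card V2 \<ge> n0
           \<longrightarrow> bip_rich \<delta> \<epsilon> V1 V2 E"
proof -
  define \<theta> where "\<theta> = 1 / (40 * C + 4)"
  define q where "q = 2 powr (- \<theta> / C)"
  define \<epsilon> where "\<epsilon> = (1 - q) / 2"
  have "\<theta> > 0" unfolding \<theta>_def using assms by simp
  then have "\<theta>/C > 0" using assms by simp
  then have "2 powr (-\<theta>/C) < 2 powr 0" by (intro powr_less_mono) auto
  then have q0: "q > 0" "q < 1" using q_def by auto
  then have e0: "\<epsilon> > 0" using \<epsilon>_def by simp
  obtain N :: nat where N: "\<forall>n\<ge>N. 1 \<le> real n \<and> C * log 2 (real n) + 1 \<le> sqrt (real n)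
     \<and> 2 * (C * log 2 (real n) + 1) \<le> \<delta> * real n \<and> 2 * (C * log 2 (real n) + 1) \<le> real n
     \<and> C * log 2 (real n) + 1 \<le> q / 4 * real n powr (1/10)"
    using eventual_conds[OF assms q0(1)] by blast
  have "\<forall>V1 V2 E. bip_graph V1 V2 E \<and> bip_ramsey C V1 V2 E \<and> card V1 \<ge> N \<and> card V2 \<ge> N
           \<longrightarrow> bip_rich \<delta> \<epsilon> V1 V2 E"
  proof (intro allI impI)
    fix V1 V2 E assume H: "bip_graph V1 V2 E \<and> bip_ramsey C V1 V2 E \<and> card V1 \<ge> N \<and> card V2 \<ge> N"
    then have f1: "finite V1" and f2: "finite V2" and R: "bip_ramsey C V1 V2 E"
      and c1: "card V1 \<ge> N" and c2: "card V2 \<ge> N" unfolding bip_graph_def by auto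
    have N1: "1 \<le> real (card V1) \<and> C * log 2 (real (card V1)) + 1 \<le> sqrt (real (card V1))
     \<and> 2 * (C * log 2 (real (card V1)) + 1) \<le> \<delta> * real (card V1) \<and> 2 * (C * log 2 (real (card V1)) + 1) \<le> real (card V1)
     \<and> C * log 2 (real (card V1)) + 1 \<le> q / 4 * real (card V1) powr (1/10)" using N c1 by blast
    have N2: "1 \<le> real (card V2) \<and> C * log 2 (real (card V2)) + 1 \<le> sqrt (real (card V2))
     \<and> 2 * (C * log 2 (real (card V2)) + 1) \<le> \<delta> * real (card V2) \<and> 2 * (C * log 2 (real (card V2)) + 1) \<le> real (card V2)
     \<and> C * log 2 (real (card V2)) + 1 \<le> q / 4 * real (card V2) powr (1/10)" using N c2 by blast
    have NRa: "\<not> (T1 \<times> T2 \<subseteq> E \<or> T1 \<times> T2 \<inter> E = {})"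
      if "T1 \<subseteq> V1" "T2 \<subseteq> V2" "card T1 = nat \<lceil>C * log 2 (card V1)\<rceil>"
         "card T2 = nat \<lceil>C * log 2 (card V2)\<rceil>" for T1 T2
      using R that nat_ceil_ge unfolding bip_ramsey_def by blast
    have side1: "rich_side \<delta> \<epsilon> V1 V2 E"
      by (rule side[OF assms f1 f2 \<theta>_def q_def \<epsilon>_def]) (use NRa N1 N2 in auto)
    let ?E = "(\<lambda>(a, b). (b, a)) ` E"
    have NRb: "\<not> (T1 \<times> T2 \<subseteq> ?E \<or> T1 \<times> T2 \<inter> ?E = {})"
      if T: "T1 \<subseteq> V2" "T2 \<subseteq> V1" "card T1 = nat \<lceil>C * log 2 (card V2)\<rceil>"
         "card T2 = nat \<lceil>C * log 2 (card V1)\<rceil>" for T1 T2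
    proof
      assume h: "T1 \<times> T2 \<subseteq> ?E \<or> T1 \<times> T2 \<inter> ?E = {}"
      have "T2 \<times> T1 \<subseteq> E \<or> T2 \<times> T1 \<inter> E = {}"
      proof (cases "T1 \<times> T2 \<subseteq> ?E")
        case True
        have "T2 \<times> T1 \<subseteq> E"
        proof
          fix p assume "p \<in> T2 \<times> T1"
          then obtain x y where p: "p = (x, y)" "x \<in> T2" "y \<in> T1" by blast
          then have "(y, x) \<in> ?E" using True by blast
          then show "p \<in> E" using p by auto
        qed
        then show ?thesis by blast
      next
        case False
        then have h2: "T1 \<times> T2 \<inter> ?E = {}" using h by blast
        have "T2 \<times> T1 \<inter> E = {}"
        proof (rule ccontr)
          assume "T2 \<times> T1 \<inter> E \<noteq> {}"
          then obtain x y where "x \<in> T2" "y \<in> T1" "(x, y) \<in> E" by blast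
          then have "(y, x) \<in> T1 \<times> T2 \<inter> ?E" by force
          then show False using h2 by blast
        qed
        then show ?thesis by blast
      qed
      then show False using NRa[OF T(2) T(1) T(4) T(3)] by blast
    qed
    have side2: "rich_side \<delta> \<epsilon> V2 V1 ?E"
      by (rule side[OF assms f2 f1 \<theta>_def q_def \<epsilon>_def]) (use NRb N1 N2 in auto)
    show "bip_rich \<delta> \<epsilon> V1 V2 E" unfolding bip_rich_def using side1 side2 by blast
  qed
  then show ?thesis using e0 by blast
qed

end
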